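(* Let $\mathcal{A}$ be an essentially small additive category admitting finite coproducts. Endow the split Grothendieck group $\mathrm{K}_0^\oplus(\mathcal{A})$ with the heap structure $[\overline{A},\overline{B},\overline{C}]_\oplus:=\overline{A}-\overline{B}+\overline{C}$. Then there is a canonical epimorphism of heaps $\mathrm{K}_0^\oplus(\mathcal{A})\twoheadrightarrow \mathrm{K}_0^{\mathrm{heap}}(\mathcal{A})$ sending the class of an object to the class of the same object.
   Context: A heap is a set $H$ with a ternary operation $[\_,\_,\_]:H^3\to H$ satisfying $[a,b,[c,d,e]]=[[a,b,c],d,e]$ and $[x,x,y]=y=[y,x,x]$. The split Grothendieck group $\mathrm{K}_0^\oplus(\mathcal{A})$ of an additive category is the abelian group generated by isomorphism classes $\overline{A}$ of objects subject to $\overline{A\oplus B}=\overline{A}+\overline{B}$. For an essentially small category $\mathcal{C}$, its Grothendieck heap $\mathrm{K}_0^{\mathrm{heap}}(\mathcal{C})$ is the heap generated by the isomorphism classes $\overline{X}$ of objects of $\mathcal{C}$, subject to the relations $[\overline{X},\overline{Y},\overline{Z}]=\overline{X\sqcup_Y Z}$ for every pushout square $X\leftarrow Y\rightarrow Z$ in $\mathcal{C}$ in which at least one of the two maps $Y\to X$, $Y\to Z$ is a monomorphism. *)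

theory Defs
  imports Main
begin

text \<open>A category given by an object set and a morphism set (inside ambient types,
so it is automatically (essentially) small), together with preadditive data:
addition, zero morphisms and negation on hom-sets.\<close>

record ('o, 'm) addcat =
  cOb   :: "'o set"
  cMor  :: "'m set"
  cDom  :: "'m \<Rightarrow> 'o"
  cCod  :: "'m \<Rightarrow> 'o"
  cId   :: "'o \<Rightarrow> 'm"
  cComp :: "'m \<Rightarrow> 'm \<Rightarrow> 'm"   (* cComp g f = g o f *)
  cAdd  :: "'m \<Rightarrow> 'm \<Rightarrow> 'm"
  cZero :: "'o \<Rightarrow> 'o \<Rightarrow> 'm"
  cNeg  :: "'m \<Rightarrow> 'm"

definition Hom :: "('o, 'm) addcat \<Rightarrow> 'o \<Rightarrow> 'o \<Rightarrow> 'm set" where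
  "Hom C A B = {f \<in> cMor C. cDom C f = A \<and> cCod C f = B}"

definition category :: "('o, 'm) addcat \<Rightarrow> bool" where
  "category C \<longleftrightarrow>
     (\<forall>f\<in>cMor C. cDom C f \<in> cOb C \<and> cCod C f \<in> cOb C) \<and>
     (\<forall>A\<in>cOb C. cId C A \<in> Hom C A A) \<and>
     (\<forall>f\<in>cMor C. \<forall>g\<in>cMor C. cCod C f = cDom C g \<longrightarrow>
          cComp C g f \<in> Hom C (cDom C f) (cCod C g)) \<and>
     (\<forall>f\<in>cMor C. cComp C f (cId C (cDom C f)) = f \<and> cComp C (cId C (cCod C f)) f = f) \<and>
     (\<forall>f\<in>cMor C. \<forall>g\<in>cMor C. \<forall>h\<in>cMor C.
          cCod C f = cDom C g \<longrightarrow> cCod C g = cDom C h \<longrightarrow>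
          cComp C h (cComp C g f) = cComp C (cComp C h g) f)"

definition preadditive :: "('o, 'm) addcat \<Rightarrow> bool" where
  "preadditive C \<longleftrightarrow> category C \<and>
     (\<forall>A\<in>cOb C. \<forall>B\<in>cOb C.
        cZero C A B \<in> Hom C A B \<and>
        (\<forall>f\<in>Hom C A B. cNeg C f \<in> Hom C A B \<and>
           cAdd C (cZero C A B) f = f \<and> cAdd C (cNeg C f) f = cZero C A B) \<and>
        (\<forall>f\<in>Hom C A B. \<forall>g\<in>Hom C A B. cAdd C f g \<in> Hom C A B \<and> cAdd C f g = cAdd C g f) \<and>
        (\<forall>f\<in>Hom C A B. \<forall>g\<in>Hom C A B. \<forall>h\<in>Hom C A B.
            cAdd C (cAdd C f g) h = cAdd C f (cAdd C g h))) \<and>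
     (\<forall>A\<in>cOb C. \<forall>B\<in>cOb C. \<forall>D\<in>cOb C.
        \<forall>f\<in>Hom C A B. \<forall>g\<in>Hom C A B. \<forall>h\<in>Hom C B D.
          cComp C h (cAdd C f g) = cAdd C (cComp C h f) (cComp C h g)) \<and>
     (\<forall>A\<in>cOb C. \<forall>B\<in>cOb C. \<forall>D\<in>cOb C.
        \<forall>h\<in>Hom C A B. \<forall>f\<in>Hom C B D. \<forall>g\<in>Hom C B D.
          cComp C (cAdd C f g) h = cAdd C (cComp C f h) (cComp C g h))"

definition zero_object :: "('o, 'm) addcat \<Rightarrow> 'o \<Rightarrow> bool" where
  "zero_object C Z \<longleftrightarrow> Z \<in> cOb C \<and>
     (\<forall>A\<in>cOb C. (\<exists>!f. f \<in> Hom C Z A) \<and> (\<exists>!f. f \<in> Hom C A Z))"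

definition biproduct ::
  "('o, 'm) addcat \<Rightarrow> 'o \<Rightarrow> 'o \<Rightarrow> 'o \<Rightarrow> 'm \<Rightarrow> 'm \<Rightarrow> 'm \<Rightarrow> 'm \<Rightarrow> bool" where
  "biproduct C A B P i1 i2 p1 p2 \<longleftrightarrow>
     A \<in> cOb C \<and> B \<in> cOb C \<and> P \<in> cOb C \<and>
     i1 \<in> Hom C A P \<and> i2 \<in> Hom C B P \<and> p1 \<in> Hom C P A \<and> p2 \<in> Hom C P B \<and>
     cComp C p1 i1 = cId C A \<and> cComp C p2 i2 = cId C B \<and>
     cComp C p2 i1 = cZero C A B \<and> cComp C p1 i2 = cZero C B A \<and>
     cAdd C (cComp C i1 p1) (cComp C i2 p2) = cId C P"

definition additive :: "('o, 'm) addcat \<Rightarrow> bool" where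
  "additive C \<longleftrightarrow> preadditive C \<and> (\<exists>Z. zero_object C Z) \<and>
     (\<forall>A\<in>cOb C. \<forall>B\<in>cOb C. \<exists>P i1 i2 p1 p2. biproduct C A B P i1 i2 p1 p2)"

definition initial_object :: "('o, 'm) addcat \<Rightarrow> 'o \<Rightarrow> bool" where
  "initial_object C I \<longleftrightarrow> I \<in> cOb C \<and> (\<forall>A\<in>cOb C. \<exists>!f. f \<in> Hom C I A)"

definition coproduct :: "('o, 'm) addcat \<Rightarrow> 'o \<Rightarrow> 'o \<Rightarrow> 'o \<Rightarrow> 'm \<Rightarrow> 'm \<Rightarrow> bool" where
  "coproduct C A B P i1 i2 \<longleftrightarrow>
     P \<in> cOb C \<and> i1 \<in> Hom C A P \<and> i2 \<in> Hom C B P \<and>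
     (\<forall>Q\<in>cOb C. \<forall>a\<in>Hom C A Q. \<forall>b\<in>Hom C B Q.
        \<exists>!h. h \<in> Hom C P Q \<and> cComp C h i1 = a \<and> cComp C h i2 = b)"

definition has_finite_coproducts :: "('o, 'm) addcat \<Rightarrow> bool" where
  "has_finite_coproducts C \<longleftrightarrow> (\<exists>I. initial_object C I) \<and>
     (\<forall>A\<in>cOb C. \<forall>B\<in>cOb C. \<exists>P i1 i2. coproduct C A B P i1 i2)"

definition iso :: "('o, 'm) addcat \<Rightarrow> 'm \<Rightarrow> bool" where
  "iso C f \<longleftrightarrow> f \<in> cMor C \<and>
     (\<exists>g\<in>Hom C (cCod C f) (cDom C f).
        cComp C g f = cId C (cDom C f) \<and> cComp C f g = cId C (cCod C f))"

definition isomorphic :: "('o, 'm) addcat \<Rightarrow> 'o \<Rightarrow> 'o \<Rightarrow> bool" where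
  "isomorphic C A B \<longleftrightarrow> (\<exists>f\<in>Hom C A B. iso C f)"

definition mono :: "('o, 'm) addcat \<Rightarrow> 'm \<Rightarrow> bool" where
  "mono C f \<longleftrightarrow> f \<in> cMor C \<and>
     (\<forall>g\<in>cMor C. \<forall>h\<in>cMor C. cCod C g = cDom C f \<longrightarrow> cCod C h = cDom C f \<longrightarrow>
        cDom C g = cDom C h \<longrightarrow> cComp C f g = cComp C f h \<longrightarrow> g = h)"

text \<open>Pushout square  X <-f- Y -g-> Z,  with  u : X -> P,  v : Z -> P.\<close>
definition pushout ::
  "('o, 'm) addcat \<Rightarrow> 'o \<Rightarrow> 'o \<Rightarrow> 'o \<Rightarrow> 'm \<Rightarrow> 'm \<Rightarrow> 'o \<Rightarrow> 'm \<Rightarrow> 'm \<Rightarrow> bool" where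
  "pushout C X Y Z f g P u v \<longleftrightarrow>
     f \<in> Hom C Y X \<and> g \<in> Hom C Y Z \<and> P \<in> cOb C \<and> u \<in> Hom C X P \<and> v \<in> Hom C Z P \<and>
     cComp C u f = cComp C v g \<and>
     (\<forall>Q\<in>cOb C. \<forall>a\<in>Hom C X Q. \<forall>b\<in>Hom C Z Q. cComp C a f = cComp C b g \<longrightarrow>
        (\<exists>!h. h \<in> Hom C P Q \<and> cComp C h u = a \<and> cComp C h v = b))"

definition heap_hom ::
  "'a set \<Rightarrow> ('a \<Rightarrow> 'a \<Rightarrow> 'a \<Rightarrow> 'a) \<Rightarrow> 'b set \<Rightarrow> ('b \<Rightarrow> 'b \<Rightarrow> 'b \<Rightarrow> 'b) \<Rightarrow> ('a \<Rightarrow> 'b) \<Rightarrow> bool" where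
  "heap_hom H t H' t' \<phi> \<longleftrightarrow> (\<forall>x\<in>H. \<phi> x \<in> H') \<and>
     (\<forall>a\<in>H. \<forall>b\<in>H. \<forall>c\<in>H. \<phi> (t a b c) = t' (\<phi> a) (\<phi> b) (\<phi> c))"

datatype 'a hterm = HGen 'a | HOp "'a hterm" "'a hterm" "'a hterm"

inductive heap_cong :: "('a hterm \<Rightarrow> 'a hterm \<Rightarrow> bool) \<Rightarrow> 'a hterm \<Rightarrow> 'a hterm \<Rightarrow> bool"
  for R where
  hc_refl: "heap_cong R s s"
| hc_sym: "heap_cong R s t \<Longrightarrow> heap_cong R t s"
| hc_trans: "heap_cong R s t \<Longrightarrow> heap_cong R t u \<Longrightarrow> heap_cong R s u"
| hc_op: "heap_cong R a a' \<Longrightarrow> heap_cong R b b' \<Longrightarrow> heap_cong R c c' \<Longrightarrow>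
           heap_cong R (HOp a b c) (HOp a' b' c')"
| hc_assoc: "heap_cong R (HOp a b (HOp c d e)) (HOp (HOp a b c) d e)"
| hc_mal1: "heap_cong R (HOp x x y) y"
| hc_mal2: "heap_cong R (HOp y x x) y"
| hc_rel: "R s t \<Longrightarrow> heap_cong R s t"

definition pres_heap_carrier :: "'a set \<Rightarrow> ('a hterm \<Rightarrow> 'a hterm \<Rightarrow> bool) \<Rightarrow> 'a hterm set set" where
  "pres_heap_carrier X R = {{t'. heap_cong R t t'} | t. set_hterm t \<subseteq> X}"

definition pres_heap_op ::
  "('a hterm \<Rightarrow> 'a hterm \<Rightarrow> bool) \<Rightarrow> 'a hterm set \<Rightarrow> 'a hterm set \<Rightarrow> 'a hterm set \<Rightarrow> 'a hterm set" where
  "pres_heap_op R A B D =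
     {t'. heap_cong R (HOp (SOME a. a \<in> A) (SOME b. b \<in> B) (SOME d. d \<in> D)) t'}"

datatype 'a gterm = GGen 'a | GZero | GAdd "'a gterm" "'a gterm" | GNeg "'a gterm"

inductive ab_cong :: "('a gterm \<Rightarrow> 'a gterm \<Rightarrow> bool) \<Rightarrow> 'a gterm \<Rightarrow> 'a gterm \<Rightarrow> bool"
  for R where
  ac_refl: "ab_cong R s s"
| ac_sym: "ab_cong R s t \<Longrightarrow> ab_cong R t s"
| ac_trans: "ab_cong R s t \<Longrightarrow> ab_cong R t u \<Longrightarrow> ab_cong R s u"
| ac_add: "ab_cong R a a' \<Longrightarrow> ab_cong R b b' \<Longrightarrow> ab_cong R (GAdd a b) (GAdd a' b')"
| ac_neg: "ab_cong R a a' \<Longrightarrow> ab_cong R (GNeg a) (GNeg a')"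
| ac_assoc: "ab_cong R (GAdd (GAdd a b) c) (GAdd a (GAdd b c))"
| ac_comm: "ab_cong R (GAdd a b) (GAdd b a)"
| ac_zero: "ab_cong R (GAdd GZero a) a"
| ac_inv: "ab_cong R (GAdd (GNeg a) a) GZero"
| ac_rel: "R s t \<Longrightarrow> ab_cong R s t"

definition pres_ab_carrier :: "'a set \<Rightarrow> ('a gterm \<Rightarrow> 'a gterm \<Rightarrow> bool) \<Rightarrow> 'a gterm set set" where
  "pres_ab_carrier X R = {{t'. ab_cong R t t'} | t. set_gterm t \<subseteq> X}"

definition pres_ab_heap_op ::
  "('a gterm \<Rightarrow> 'a gterm \<Rightarrow> bool) \<Rightarrow> 'a gterm set \<Rightarrow> 'a gterm set \<Rightarrow> 'a gterm set \<Rightarrow> 'a gterm set" where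
  "pres_ab_heap_op R A B D =
     {t'. ab_cong R (GAdd (GAdd (SOME a. a \<in> A) (GNeg (SOME b. b \<in> B))) (SOME d. d \<in> D)) t'}"

definition split_rel :: "('o, 'm) addcat \<Rightarrow> 'o gterm \<Rightarrow> 'o gterm \<Rightarrow> bool" where
  "split_rel C s t \<longleftrightarrow>
     (\<exists>A B. isomorphic C A B \<and> s = GGen A \<and> t = GGen B) \<or>
     (\<exists>A B P i1 i2 p1 p2. biproduct C A B P i1 i2 p1 p2 \<and>
        s = GGen P \<and> t = GAdd (GGen A) (GGen B))"

definition K0split :: "('o, 'm) addcat \<Rightarrow> 'o gterm set set" where
  "K0split C = pres_ab_carrier (cOb C) (split_rel C)"

definition K0split_heap_op ::
  "('o, 'm) addcat \<Rightarrow> 'o gterm set \<Rightarrow> 'o gterm set \<Rightarrow> 'o gterm set \<Rightarrow> 'o gterm set" where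
  "K0split_heap_op C = pres_ab_heap_op (split_rel C)"

definition split_class :: "('o, 'm) addcat \<Rightarrow> 'o \<Rightarrow> 'o gterm set" where
  "split_class C A = {t. ab_cong (split_rel C) (GGen A) t}"

definition heap_rel :: "('o, 'm) addcat \<Rightarrow> 'o hterm \<Rightarrow> 'o hterm \<Rightarrow> bool" where
  "heap_rel C s t \<longleftrightarrow>
     (\<exists>A B. isomorphic C A B \<and> s = HGen A \<and> t = HGen B) \<or>
     (\<exists>X Y Z f g P u v. pushout C X Y Z f g P u v \<and> (mono C f \<or> mono C g) \<and>
        s = HOp (HGen X) (HGen Y) (HGen Z) \<and> t = HGen P)"

definition K0heap :: "('o, 'm) addcat \<Rightarrow> 'o hterm set set" where
  "K0heap C = pres_heap_carrier (cOb C) (heap_rel C)"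

definition K0heap_op ::
  "('o, 'm) addcat \<Rightarrow> 'o hterm set \<Rightarrow> 'o hterm set \<Rightarrow> 'o hterm set \<Rightarrow> 'o hterm set" where
  "K0heap_op C = pres_heap_op (heap_rel C)"

definition heap_class :: "('o, 'm) addcat \<Rightarrow> 'o \<Rightarrow> 'o hterm set" where
  "heap_class C A = {t. heap_cong (heap_rel C) (HGen A) t}"

end

theory Submission
  imports Defs
begin


lemmas [trans] = heap_cong.hc_trans

context
  fixes R :: "'a hterm \<Rightarrow> 'a hterm \<Rightarrow> bool"
begin

abbreviation hc (infix "\<approx>" 50) where "x \<approx> y \<equiv> heap_cong R x y"

lemma c1: "a \<approx> a' \<Longrightarrow> HOp a b c \<approx> HOp a' b c"
  by (simp add: heap_cong.hc_op heap_cong.hc_refl)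
lemma c2: "b \<approx> b' \<Longrightarrow> HOp a b c \<approx> HOp a b' c"
  by (simp add: heap_cong.hc_op heap_cong.hc_refl)
lemma c3: "c \<approx> c' \<Longrightarrow> HOp a b c \<approx> HOp a b c'"
  by (simp add: heap_cong.hc_op heap_cong.hc_refl)
lemma asl: "HOp (HOp a b c) d e \<approx> HOp a b (HOp c d e)"
  by (simp add: heap_cong.hc_assoc heap_cong.hc_sym)
lemma asr: "HOp a b (HOp c d e) \<approx> HOp (HOp a b c) d e"
  by (simp add: heap_cong.hc_assoc)
lemma m1: "HOp x x y \<approx> y" by (rule heap_cong.hc_mal1)
lemma m2: "HOp y x x \<approx> y" by (rule heap_cong.hc_mal2)
lemma m1s: "y \<approx> HOp x x y" by (rule heap_cong.hc_sym, rule heap_cong.hc_mal1)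
lemma m2s: "y \<approx> HOp y x x" by (rule heap_cong.hc_sym, rule heap_cong.hc_mal2)
lemma sy: "x \<approx> y \<Longrightarrow> y \<approx> x" by (rule heap_cong.hc_sym)

lemma L3: "HOp (HOp x e (HOp e y e)) e z \<approx> HOp x y z"
proof -
  have "HOp x e (HOp e y e) \<approx> HOp (HOp x e e) y e" by (rule asr)
  also have "\<dots> \<approx> HOp x y e" by (rule c1, rule m2)
  finally have h: "HOp x e (HOp e y e) \<approx> HOp x y e" .
  have "HOp (HOp x e (HOp e y e)) e z \<approx> HOp (HOp x y e) e z" by (rule c1, rule h)
  also have "\<dots> \<approx> HOp x y (HOp e e z)" by (rule asl)
  also have "\<dots> \<approx> HOp x y z" by (rule c3, rule m1)
  finally show ?thesis .
qed

lemma L4: "HOp (HOp e x e) e x \<approx> e"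
proof -
  have "HOp (HOp e x e) e x \<approx> HOp e x (HOp e e x)" by (rule asl)
  also have "\<dots> \<approx> HOp e x x" by (rule c3, rule m1)
  also have "\<dots> \<approx> e" by (rule m2)
  finally show ?thesis .
qed

definition comm where "comm e x y \<longleftrightarrow> HOp x e y \<approx> HOp y e x"

lemma comm_sym: "comm e x y \<Longrightarrow> comm e y x"
  unfolding comm_def by (rule sy)

lemma L5: assumes cb: "HOp b e y \<approx> HOp y e b" shows "HOp e b y \<approx> HOp y b e"
proof -
  have "y \<approx> HOp e e y" by (rule m1s)
  also have "\<dots> \<approx> HOp (HOp e b b) e y" by (rule c1, rule m2s)
  also have "\<dots> \<approx> HOp e b (HOp b e y)" by (rule asl)
  also have "\<dots> \<approx> HOp e b (HOp y e b)" by (rule c3, rule cb)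
  also have "\<dots> \<approx> HOp (HOp e b y) e b" by (rule asr)
  finally have 1: "y \<approx> HOp (HOp e b y) e b" .
  have "HOp y b e \<approx> HOp (HOp (HOp e b y) e b) b e" by (rule c1, rule 1)
  also have "\<dots> \<approx> HOp (HOp e b y) e (HOp b b e)" by (rule asl)
  also have "\<dots> \<approx> HOp (HOp e b y) e e" by (rule c3, rule m1)
  also have "\<dots> \<approx> HOp e b y" by (rule m2)
  finally show ?thesis by (rule sy)
qed

lemma L6: assumes ca: "comm e a y" and cb: "comm e b y" and cc: "comm e c y"
  shows "comm e (HOp a b c) y"
proof -
  have "HOp a b y \<approx> HOp (HOp a e e) b y" by (rule c1, rule m2s)
  also have "\<dots> \<approx> HOp a e (HOp e b y)" by (rule asl)
  also have "\<dots> \<approx> HOp a e (HOp y b e)" by (rule c3, rule L5, use cb in \<open>simp add: comm_def\<close>)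
  also have "\<dots> \<approx> HOp (HOp a e y) b e" by (rule asr)
  also have "\<dots> \<approx> HOp (HOp y e a) b e" by (rule c1, use ca in \<open>simp add: comm_def\<close>)
  also have "\<dots> \<approx> HOp y e (HOp a b e)" by (rule asl)
  finally have 1: "HOp a b y \<approx> HOp y e (HOp a b e)" .
  have "HOp (HOp a b c) e y \<approx> HOp a b (HOp c e y)" by (rule asl)
  also have "\<dots> \<approx> HOp a b (HOp y e c)" by (rule c3, use cc in \<open>simp add: comm_def\<close>)
  also have "\<dots> \<approx> HOp (HOp a b y) e c" by (rule asr)
  also have "\<dots> \<approx> HOp (HOp y e (HOp a b e)) e c" by (rule c1, rule 1)
  also have "\<dots> \<approx> HOp y e (HOp (HOp a b e) e c)" by (rule asl)
  also have "\<dots> \<approx> HOp y e (HOp a b (HOp e e c))" by (rule c3, rule asl)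
  also have "\<dots> \<approx> HOp y e (HOp a b c)" by (rule c3, rule c3, rule m1)
  finally show ?thesis unfolding comm_def .
qed

lemma comm_e: "comm e e y"
  unfolding comm_def
proof -
  have "HOp e e y \<approx> y" by (rule m1)
  also have "\<dots> \<approx> HOp y e e" by (rule m2s)
  finally show "HOp e e y \<approx> HOp y e e" .
qed

lemma comm_all:
  assumes gen: "\<And>A B. A \<in> X \<Longrightarrow> B \<in> X \<Longrightarrow> comm e (HGen A) (HGen B)"
    and x: "set_hterm x \<subseteq> X" and y: "set_hterm y \<subseteq> X"
  shows "comm e x y"
proof -
  have step1: "comm e x (HGen B)" if "B \<in> X" "set_hterm x \<subseteq> X" for x B
    using that(2)
  proof (induction x)
    case (HGen A) then show ?case using gen that(1) by simp
  next
    case (HOp a b c) then show ?case by (intro L6) auto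
  qed
  show ?thesis using y
  proof (induction y)
    case (HGen B) then show ?case using step1 x by simp
  next
    case (HOp a b c)
    hence "comm e x a" "comm e x b" "comm e x c" by auto
    thus ?case by (rule comm_sym[OF L6[OF comm_sym comm_sym comm_sym]])
  qed
qed

end


lemma HomD: "f \<in> Hom C A B \<Longrightarrow> f \<in> cMor C \<and> cDom C f = A \<and> cCod C f = B"
  by (simp add: Hom_def)

lemma HomI: "f \<in> cMor C \<Longrightarrow> cDom C f = A \<Longrightarrow> cCod C f = B \<Longrightarrow> f \<in> Hom C A B"
  by (simp add: Hom_def)

context
  fixes C :: "('o,'m) addcat"
  assumes cat: "category C"
begin

lemma Hom_Ob: "f \<in> Hom C A B \<Longrightarrow> A \<in> cOb C \<and> B \<in> cOb C"
  using cat unfolding category_def Hom_def by auto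

lemma comp_Hom: "f \<in> Hom C A B \<Longrightarrow> g \<in> Hom C B D \<Longrightarrow> cComp C g f \<in> Hom C A D"
  using cat unfolding category_def Hom_def by auto

lemma id_Hom: "A \<in> cOb C \<Longrightarrow> cId C A \<in> Hom C A A"
  using cat unfolding category_def by auto

lemma idr: "f \<in> Hom C A B \<Longrightarrow> cComp C f (cId C A) = f"
  using cat unfolding category_def Hom_def by auto

lemma idl: "f \<in> Hom C A B \<Longrightarrow> cComp C (cId C B) f = f"
  using cat unfolding category_def Hom_def by auto

lemma cassoc: "f \<in> Hom C A B \<Longrightarrow> g \<in> Hom C B D \<Longrightarrow> h \<in> Hom C D E \<Longrightarrow>
   cComp C h (cComp C g f) = cComp C (cComp C h g) f"
  using cat unfolding category_def Hom_def by auto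

end

context
  fixes C :: "('o,'m) addcat"
  assumes pa: "preadditive C"
begin

lemma pcat: "category C" using pa preadditive_def by blast

lemma zero_Hom: "A \<in> cOb C \<Longrightarrow> B \<in> cOb C \<Longrightarrow> cZero C A B \<in> Hom C A B"
  using pa unfolding preadditive_def by blast

lemma add_Hom: "f \<in> Hom C A B \<Longrightarrow> g \<in> Hom C A B \<Longrightarrow> cAdd C f g \<in> Hom C A B"
  using pa Hom_Ob[OF pcat] unfolding preadditive_def by blast

lemma neg_Hom: "f \<in> Hom C A B \<Longrightarrow> cNeg C f \<in> Hom C A B"
  using pa Hom_Ob[OF pcat] unfolding preadditive_def by blast

lemma add_comm: "f \<in> Hom C A B \<Longrightarrow> g \<in> Hom C A B \<Longrightarrow> cAdd C f g = cAdd C g f"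
  using pa Hom_Ob[OF pcat] unfolding preadditive_def by blast

lemma add_assoc: "f \<in> Hom C A B \<Longrightarrow> g \<in> Hom C A B \<Longrightarrow> h \<in> Hom C A B \<Longrightarrow>
   cAdd C (cAdd C f g) h = cAdd C f (cAdd C g h)"
  using pa Hom_Ob[OF pcat] unfolding preadditive_def by blast

lemma zero_add: "f \<in> Hom C A B \<Longrightarrow> cAdd C (cZero C A B) f = f"
  using pa Hom_Ob[OF pcat] unfolding preadditive_def by blast

lemma add_zero: "f \<in> Hom C A B \<Longrightarrow> cAdd C f (cZero C A B) = f"
  using zero_add add_comm zero_Hom Hom_Ob[OF pcat] by metis

lemma neg_add: "f \<in> Hom C A B \<Longrightarrow> cAdd C (cNeg C f) f = cZero C A B"
  using pa Hom_Ob[OF pcat] unfolding preadditive_def by blast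

lemma distl: "f \<in> Hom C A B \<Longrightarrow> g \<in> Hom C A B \<Longrightarrow> h \<in> Hom C B D \<Longrightarrow>
   cComp C h (cAdd C f g) = cAdd C (cComp C h f) (cComp C h g)"
  using pa Hom_Ob[OF pcat] unfolding preadditive_def by blast

lemma distr: "h \<in> Hom C A B \<Longrightarrow> f \<in> Hom C B D \<Longrightarrow> g \<in> Hom C B D \<Longrightarrow>
   cComp C (cAdd C f g) h = cAdd C (cComp C f h) (cComp C g h)"
  using pa Hom_Ob[OF pcat] unfolding preadditive_def by blast

lemma idem_zero: assumes w: "w \<in> Hom C A D" and ww: "cAdd C w w = w" shows "w = cZero C A D"
proof -
  have n: "cNeg C w \<in> Hom C A D" by (rule neg_Hom[OF w])
  have "w = cAdd C (cZero C A D) w" using zero_add[OF w] by simp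
  also have "\<dots> = cAdd C (cAdd C (cNeg C w) w) w" using neg_add[OF w] by simp
  also have "\<dots> = cAdd C (cNeg C w) (cAdd C w w)" using add_assoc[OF n w w] .
  also have "\<dots> = cZero C A D" using ww neg_add[OF w] by simp
  finally show ?thesis .
qed

lemma comp_zero: assumes h: "h \<in> Hom C B D" and A: "A \<in> cOb C"
  shows "cComp C h (cZero C A B) = cZero C A D"
proof -
  have B: "B \<in> cOb C" and D: "D \<in> cOb C" using Hom_Ob[OF pcat h] by auto
  have z: "cZero C A B \<in> Hom C A B" using zero_Hom[OF A B] .
  have zz: "cAdd C (cZero C A B) (cZero C A B) = cZero C A B" using zero_add[OF z] .
  have w: "cComp C h (cZero C A B) \<in> Hom C A D" using comp_Hom[OF pcat z h] .
  show ?thesis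
    apply (rule idem_zero[OF w])
    using distl[OF z z h] zz by simp
qed

lemma zero_comp: assumes h: "h \<in> Hom C A B" and D: "D \<in> cOb C"
  shows "cComp C (cZero C B D) h = cZero C A D"
proof -
  have A: "A \<in> cOb C" and B: "B \<in> cOb C" using Hom_Ob[OF pcat h] by auto
  have z: "cZero C B D \<in> Hom C B D" using zero_Hom[OF B D] .
  have zz: "cAdd C (cZero C B D) (cZero C B D) = cZero C B D" using zero_add[OF z] .
  have w: "cComp C (cZero C B D) h \<in> Hom C A D" using comp_Hom[OF pcat h z] .
  show ?thesis
    apply (rule idem_zero[OF w])
    using distr[OF h z z] zz by simp
qed

lemma biprod_swap: "biproduct C A B P i1 i2 p1 p2 \<Longrightarrow> biproduct C B A P i2 i1 p2 p1"
  unfolding biproduct_def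
proof (elim conjE, intro conjI)
  assume "i1 \<in> Hom C A P" "i2 \<in> Hom C B P" "p1 \<in> Hom C P A" "p2 \<in> Hom C P B"
    and s: "cAdd C (cComp C i1 p1) (cComp C i2 p2) = cId C P"
  then have "cComp C i1 p1 \<in> Hom C P P" "cComp C i2 p2 \<in> Hom C P P"
    using comp_Hom[OF pcat] by auto
  then show "cAdd C (cComp C i2 p2) (cComp C i1 p1) = cId C P" using s add_comm by metis
qed

lemma zero_obj_unique_from: "zero_object C Z \<Longrightarrow> A \<in> cOb C \<Longrightarrow> f \<in> Hom C Z A \<Longrightarrow> g \<in> Hom C Z A \<Longrightarrow> f = g"
  unfolding zero_object_def by blast

lemma zero_obj_unique_to: "zero_object C Z \<Longrightarrow> A \<in> cOb C \<Longrightarrow> f \<in> Hom C A Z \<Longrightarrow> g \<in> Hom C A Z \<Longrightarrow> f = g"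
  unfolding zero_object_def by blast

lemma biprod_pushout:
  assumes Z: "zero_object C Z" and bp: "biproduct C A B P i1 i2 p1 p2"
  shows "heap_rel C (HOp (HGen A) (HGen Z) (HGen B)) (HGen P)"
proof -
  have cat: "category C" by (rule pcat)
  have ZO: "Z \<in> cOb C" using Z unfolding zero_object_def by simp
  from bp have A: "A \<in> cOb C" and B: "B \<in> cOb C" and P: "P \<in> cOb C"
    and i1: "i1 \<in> Hom C A P" and i2: "i2 \<in> Hom C B P" and p1: "p1 \<in> Hom C P A"
    and p2: "p2 \<in> Hom C P B" and e11: "cComp C p1 i1 = cId C A" and e22: "cComp C p2 i2 = cId C B"
    and e21: "cComp C p2 i1 = cZero C A B" and e12: "cComp C p1 i2 = cZero C B A"
    and sum: "cAdd C (cComp C i1 p1) (cComp C i2 p2) = cId C P"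
    unfolding biproduct_def by simp_all
  have "\<exists>!f. f \<in> Hom C Z A" using Z A unfolding zero_object_def by simp
  then obtain z1 where z1: "z1 \<in> Hom C Z A" by blast
  have "\<exists>!f. f \<in> Hom C Z B" using Z B unfolding zero_object_def by simp
  then obtain z2 where z2: "z2 \<in> Hom C Z B" by blast
  have mono: "mono C z1"
    unfolding mono_def
  proof (intro conjI ballI impI)
    show "z1 \<in> cMor C" using HomD[OF z1] by simp
    fix g h assume g: "g \<in> cMor C" and h: "h \<in> cMor C" and gc: "cCod C g = cDom C z1"
      and hc: "cCod C h = cDom C z1" and d: "cDom C g = cDom C h"
    have gH: "g \<in> Hom C (cDom C g) Z" using g gc z1 by (simp add: Hom_def)
    have hH: "h \<in> Hom C (cDom C g) Z" using h hc z1 d by (simp add: Hom_def)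
    show "g = h" using zero_obj_unique_to[OF Z _ gH hH] Hom_Ob[OF cat gH] by blast
  qed
  have comm_sq: "cComp C i1 z1 = cComp C i2 z2"
    using zero_obj_unique_from[OF Z P comp_Hom[OF cat z1 i1] comp_Hom[OF cat z2 i2]] .
  have po: "pushout C A Z B z1 z2 P i1 i2"
    unfolding pushout_def
  proof (intro conjI z1 z2 P i1 i2 comm_sq ballI impI)
    fix Q a b assume Q: "Q \<in> cOb C" and a: "a \<in> Hom C A Q" and b: "b \<in> Hom C B Q"
    define h where "h = cAdd C (cComp C a p1) (cComp C b p2)"
    have ap: "cComp C a p1 \<in> Hom C P Q" using comp_Hom[OF cat p1 a] .
    have bp2: "cComp C b p2 \<in> Hom C P Q" using comp_Hom[OF cat p2 b] .
    have hH: "h \<in> Hom C P Q" unfolding h_def using add_Hom[OF ap bp2] .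
    have h1: "cComp C h i1 = a"
    proof -
      have "cComp C h i1 = cAdd C (cComp C (cComp C a p1) i1) (cComp C (cComp C b p2) i1)"
        unfolding h_def using distr[OF i1 ap bp2] .
      also have "\<dots> = cAdd C (cComp C a (cComp C p1 i1)) (cComp C b (cComp C p2 i1))"
        using cassoc[OF cat i1 p1 a] cassoc[OF cat i1 p2 b] by simp
      also have "\<dots> = cAdd C a (cZero C A Q)"
        using e11 e21 idr[OF cat a] comp_zero[OF b A] by simp
      also have "\<dots> = a" using add_zero[OF a] .
      finally show ?thesis .
    qed
    have h2: "cComp C h i2 = b"
    proof -
      have "cComp C h i2 = cAdd C (cComp C (cComp C a p1) i2) (cComp C (cComp C b p2) i2)"
        unfolding h_def using distr[OF i2 ap bp2] .
      also have "\<dots> = cAdd C (cComp C a (cComp C p1 i2)) (cComp C b (cComp C p2 i2))"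
        using cassoc[OF cat i2 p1 a] cassoc[OF cat i2 p2 b] by simp
      also have "\<dots> = cAdd C (cZero C B Q) b"
        using e22 e12 idr[OF cat b] comp_zero[OF a B] by simp
      also have "\<dots> = b" using zero_add[OF b] .
      finally show ?thesis .
    qed
    have uniq: "k = h" if kH: "k \<in> Hom C P Q" and k1: "cComp C k i1 = a" and k2: "cComp C k i2 = b" for k
    proof -
      have ip1: "cComp C i1 p1 \<in> Hom C P P" using comp_Hom[OF cat p1 i1] .
      have ip2: "cComp C i2 p2 \<in> Hom C P P" using comp_Hom[OF cat p2 i2] .
      have "k = cComp C k (cId C P)" using idr[OF cat kH] by simp
      also have "\<dots> = cAdd C (cComp C k (cComp C i1 p1)) (cComp C k (cComp C i2 p2))"
        using sum distl[OF ip1 ip2 kH] by simp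
      also have "\<dots> = cAdd C (cComp C (cComp C k i1) p1) (cComp C (cComp C k i2) p2)"
        using cassoc[OF cat p1 i1 kH] cassoc[OF cat p2 i2 kH] by simp
      also have "\<dots> = h" unfolding h_def using k1 k2 by simp
      finally show ?thesis .
    qed
    show "\<exists>!h. h \<in> Hom C P Q \<and> cComp C h i1 = a \<and> cComp C h i2 = b"
      using hH h1 h2 uniq by blast
  qed
  show ?thesis unfolding heap_rel_def
    apply (rule disjI2)
    apply (rule exI[where x=A], rule exI[where x=Z], rule exI[where x=B], rule exI[where x=z1],
           rule exI[where x=z2], rule exI[where x=P], rule exI[where x=i1], rule exI[where x=i2])
    using po mono by simp
qed

end


fun fmap :: "'o set \<Rightarrow> 'o \<Rightarrow> 'o gterm \<Rightarrow> 'o hterm" where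
  "fmap X z (GGen A) = (if A \<in> X then HGen A else HGen z)"
| "fmap X z GZero = HGen z"
| "fmap X z (GAdd a b) = HOp (fmap X z a) (HGen z) (fmap X z b)"
| "fmap X z (GNeg a) = HOp (HGen z) (fmap X z a) (HGen z)"

fun gmap :: "'o hterm \<Rightarrow> 'o gterm" where
  "gmap (HGen A) = GGen A"
| "gmap (HOp a b c) = GAdd (GAdd (gmap a) (GNeg (gmap b))) (gmap c)"

lemma fmap_set: "z \<in> X \<Longrightarrow> set_hterm (fmap X z t) \<subseteq> X"
  by (induction t) auto

lemma gmap_set: "set_gterm (gmap t) = set_hterm t"
  by (induction t) auto

lemma fmap_gmap: "set_hterm t \<subseteq> X \<Longrightarrow> heap_cong R (fmap X z (gmap t)) t"
proof (induction t)
  case (HGen A) then show ?case by (simp add: heap_cong.hc_refl)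
next
  case (HOp a b c)
  have "heap_cong R (fmap X z (gmap (HOp a b c)))
          (HOp (fmap X z (gmap a)) (fmap X z (gmap b)) (fmap X z (gmap c)))"
    by (simp add: L3)
  also have "heap_cong R \<dots> (HOp a b c)" using HOp by (auto intro: heap_cong.hc_op)
  finally show ?case .
qed

lemma class_eq: "heap_cong R a b \<Longrightarrow> {t'. heap_cong R a t'} = {t'. heap_cong R b t'}"
  by (auto intro: heap_cong.hc_trans heap_cong.hc_sym)

lemma iso_Ob: "category C \<Longrightarrow> isomorphic C A B \<Longrightarrow> A \<in> cOb C \<and> B \<in> cOb C"
  unfolding isomorphic_def by (auto dest: Hom_Ob)

lemma wd:
  assumes ad: "additive C" and Z: "zero_object C Z"
    and st: "ab_cong (split_rel C) s t"
  shows "heap_cong (heap_rel C) (fmap (cOb C) Z s) (fmap (cOb C) Z t)"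
  using st
proof (induction rule: ab_cong.induct)
  case (ac_refl s) then show ?case by (rule heap_cong.hc_refl)
next
  case (ac_sym s t) show ?case using ac_sym.IH by (rule heap_cong.hc_sym)
next
  case (ac_trans s t u) show ?case using ac_trans.IH by (blast intro: heap_cong.hc_trans)
next
  case (ac_add a a' b b') then show ?case by (simp add: heap_cong.hc_op heap_cong.hc_refl)
next
  case (ac_neg a a') then show ?case by (simp add: heap_cong.hc_op heap_cong.hc_refl)
next
  case (ac_assoc a b c) then show ?case by (simp add: asl)
next
  case (ac_comm a b)
  have pa: "preadditive C" using ad additive_def by blast
  have ZO: "Z \<in> cOb C" using Z unfolding zero_object_def by simp
  have gen: "comm (heap_rel C) (HGen Z) (HGen A) (HGen B)" if A: "A \<in> cOb C" and B: "B \<in> cOb C" for A B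
  proof -
    obtain P i1 i2 p1 p2 where bp: "biproduct C A B P i1 i2 p1 p2"
      using ad A B unfolding additive_def by blast
    have 1: "heap_rel C (HOp (HGen A) (HGen Z) (HGen B)) (HGen P)"
      by (rule biprod_pushout[OF pa Z bp])
    have 2: "heap_rel C (HOp (HGen B) (HGen Z) (HGen A)) (HGen P)"
      by (rule biprod_pushout[OF pa Z biprod_swap[OF pa bp]])
    show ?thesis unfolding comm_def
      using heap_cong.hc_rel[where R="heap_rel C", OF 1] heap_cong.hc_sym[OF heap_cong.hc_rel[where R="heap_rel C", OF 2]]
      by (rule heap_cong.hc_trans)
  qed
  have "comm (heap_rel C) (HGen Z) (fmap (cOb C) Z a) (fmap (cOb C) Z b)"
    by (rule comm_all[where X="cOb C"]) (auto intro: gen simp: fmap_set[OF ZO])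
  then show ?case by (simp add: comm_def)
next
  case (ac_zero a) then show ?case by (simp add: m1)
next
  case (ac_inv a) then show ?case by (simp add: L4)
next
  case (ac_rel s t)
  have pa: "preadditive C" using ad additive_def by blast
  have cat: "category C" by (rule pcat[OF pa])
  from ac_rel show ?case unfolding split_rel_def
  proof (elim disjE exE conjE)
    fix A B assume i: "isomorphic C A B" and s: "s = GGen A" and t: "t = GGen B"
    have "A \<in> cOb C" "B \<in> cOb C" using iso_Ob[OF cat i] by auto
    then show ?thesis using s t i by (auto intro!: heap_cong.hc_rel simp: heap_rel_def)
  next
    fix A B P i1 i2 p1 p2 assume bp: "biproduct C A B P i1 i2 p1 p2" and s: "s = GGen P"
      and t: "t = GAdd (GGen A) (GGen B)"
    have "A \<in> cOb C" "B \<in> cOb C" "P \<in> cOb C" using bp unfolding biproduct_def by auto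
    then show ?thesis using s t heap_cong.hc_sym[OF heap_cong.hc_rel[where R="heap_rel C", OF biprod_pushout[OF pa Z bp]]]
      by simp
  qed
qed



theorem theorem2p8:
  fixes C :: "('o, 'm) addcat"
  assumes "additive C"
    and "has_finite_coproducts C"
  shows "\<exists>\<phi>. heap_hom (K0split C) (K0split_heap_op C) (K0heap C) (K0heap_op C) \<phi> \<and>
             \<phi> ` K0split C = K0heap C \<and>
             (\<forall>A\<in>cOb C. \<phi> (split_class C A) = heap_class C A)"
proof -
  have ad: "additive C" by fact
  obtain Z where Z: "zero_object C Z" using ad unfolding additive_def by blast
  have ZO: "Z \<in> cOb C" using Z unfolding zero_object_def by simp
  define F where "F = fmap (cOb C) Z"
  define HR where "HR = heap_rel C"
  define SR where "SR = split_rel C"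
  define \<phi> where "\<phi> S = {t'. heap_cong HR (F (SOME s. s \<in> S)) t'}" for S
  have wdF: "heap_cong HR (F s) (F t)" if "ab_cong SR s t" for s t
    using wd[OF ad Z] that unfolding F_def HR_def SR_def by blast
  have rep: "\<phi> {t'. ab_cong SR t t'} = {t'. heap_cong HR (F t) t'}" for t
  proof -
    have "t \<in> {t'. ab_cong SR t t'}" by (simp add: ab_cong.ac_refl)
    then have "(SOME s. s \<in> {t'. ab_cong SR t t'}) \<in> {t'. ab_cong SR t t'}" by (rule someI)
    then have "heap_cong HR (F t) (F (SOME s. s \<in> {t'. ab_cong SR t t'}))" using wdF by simp
    then show ?thesis unfolding \<phi>_def by (rule class_eq[symmetric])
  qed
  have phi_in: "\<phi> S \<in> K0heap C" if SK: "S \<in> K0split C" for S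
  proof -
    obtain t where S: "S = {t'. ab_cong SR t t'}" and t: "set_gterm t \<subseteq> cOb C"
      using SK unfolding K0split_def pres_ab_carrier_def SR_def by blast
    have "set_hterm (F t) \<subseteq> cOb C" unfolding F_def by (rule fmap_set[OF ZO])
    then show ?thesis unfolding S rep K0heap_def pres_heap_carrier_def HR_def by blast
  qed
  have phi_op: "\<phi> (K0split_heap_op C a b c) = K0heap_op C (\<phi> a) (\<phi> b) (\<phi> c)" for a b c
  proof -
    define a0 where "a0 = (SOME x. x \<in> a)"
    define b0 where "b0 = (SOME x. x \<in> b)"
    define c0 where "c0 = (SOME x. x \<in> c)"
    define x0 where "x0 = (SOME x. x \<in> \<phi> a)"
    define y0 where "y0 = (SOME x. x \<in> \<phi> b)"
    define w0 where "w0 = (SOME x. x \<in> \<phi> c)"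
    have pa: "\<phi> a = {t'. heap_cong HR (F a0) t'}" unfolding \<phi>_def a0_def ..
    have pb: "\<phi> b = {t'. heap_cong HR (F b0) t'}" unfolding \<phi>_def b0_def ..
    have pc: "\<phi> c = {t'. heap_cong HR (F c0) t'}" unfolding \<phi>_def c0_def ..
    have "F a0 \<in> \<phi> a" unfolding pa by (simp add: heap_cong.hc_refl)
    then have "x0 \<in> \<phi> a" unfolding x0_def by (rule someI)
    then have ax: "heap_cong HR (F a0) x0" unfolding pa by simp
    have "F b0 \<in> \<phi> b" unfolding pb by (simp add: heap_cong.hc_refl)
    then have "y0 \<in> \<phi> b" unfolding y0_def by (rule someI)
    then have by0: "heap_cong HR (F b0) y0" unfolding pb by simp
    have "F c0 \<in> \<phi> c" unfolding pc by (simp add: heap_cong.hc_refl)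
    then have "w0 \<in> \<phi> c" unfolding w0_def by (rule someI)
    then have cw: "heap_cong HR (F c0) w0" unfolding pc by simp
    have lhs: "\<phi> (K0split_heap_op C a b c) =
        {t'. heap_cong HR (F (GAdd (GAdd a0 (GNeg b0)) c0)) t'}"
      unfolding K0split_heap_op_def pres_ab_heap_op_def a0_def b0_def c0_def SR_def[symmetric]
      by (rule rep)
    have "heap_cong HR (F (GAdd (GAdd a0 (GNeg b0)) c0)) (HOp (F a0) (F b0) (F c0))"
      unfolding F_def by (simp add: L3)
    also have "heap_cong HR \<dots> (HOp x0 y0 w0)" using ax by0 cw by (rule heap_cong.hc_op)
    finally have "heap_cong HR (F (GAdd (GAdd a0 (GNeg b0)) c0)) (HOp x0 y0 w0)" .
    then show ?thesis unfolding lhs K0heap_op_def pres_heap_op_def HR_def[symmetric]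
        x0_def[symmetric] y0_def[symmetric] w0_def[symmetric]
      by (rule class_eq)
  qed
  have surj: "K0heap C \<subseteq> \<phi> ` K0split C"
  proof
    fix T assume "T \<in> K0heap C"
    then obtain t where T: "T = {t'. heap_cong HR t t'}" and t: "set_hterm t \<subseteq> cOb C"
      unfolding K0heap_def pres_heap_carrier_def HR_def by blast
    have S: "{t'. ab_cong SR (gmap t) t'} \<in> K0split C"
      unfolding K0split_def pres_ab_carrier_def SR_def
      by (rule CollectI, rule exI[where x="gmap t"], simp add: gmap_set t)
    have "\<phi> {t'. ab_cong SR (gmap t) t'} = T"
      unfolding rep T F_def by (rule class_eq, rule fmap_gmap[OF t])
    then show "T \<in> \<phi> ` K0split C" using S by blast
  qed
  have cls: "\<phi> (split_class C A) = heap_class C A" if "A \<in> cOb C" for A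
    unfolding split_class_def SR_def[symmetric] rep heap_class_def HR_def F_def using that by simp
  have img: "\<phi> ` K0split C = K0heap C"
  proof
    show "\<phi> ` K0split C \<subseteq> K0heap C" using phi_in by blast
  qed (rule surj)
  have hh: "heap_hom (K0split C) (K0split_heap_op C) (K0heap C) (K0heap_op C) \<phi>"
    unfolding heap_hom_def using phi_in phi_op by simp
  show ?thesis using hh img cls by blast
qed


end
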